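(* Let $E$ be a real Banach space and $\mathcal{C}\subset E$ a regular Birkhoff cone with $\ell\in E'$, $\|\ell\|=1$, and $K<\infty$ such that $\frac1K\|u\|\le\langle\ell,u\rangle\le\|u\|$ for $u\in\mathcal{C}$. Let $\mathcal{C}_1\subset\mathcal{C}$ be a subcone with finite Hilbert diameter $\Delta=\sup\{d_{\mathcal{C}}(a,b):a,b\in\mathcal{C}_1\setminus\{0\}\}<+\infty$. Suppose there are $x\in\mathcal{C}_1$ with $\langle\ell,x\rangle=1$ and $r>0$ with $B(x,r)\subset\mathcal{C}_1$. Then for every $y\in\mathcal{C}_1$, \[B_E\Big(y,\frac1K re^{-\Delta}\|y\|\Big)\subset\mathcal{C}.\]
   Context: A Birkhoff cone is a closed convex set $\mathcal{C}\subset E$ with $\mathbb{R}_+\mathcal{C}=\mathcal{C}$ and $\mathcal{C}\cap(-\mathcal{C})=\{0\}$; regular means it has non-empty interior and the stated outer regularity functional exists. A subcone is a subset $\mathcal{C}_1\subset\mathcal{C}$ with $\mathbb{R}_+\mathcal{C}_1=\mathcal{C}_1$. Hilbert metric: $\delta(a,b)=\inf\{t>0:ta-b\in\mathcal{C}\}$, $d_{\mathcal{C}}(a,b)=\log(\delta(a,b)\delta(b,a))$ for $a,b\in\mathcal{C}\setminus\{0\}$. *)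

theory Defs
  imports "HOL-Analysis.Analysis"
begin

definition birkhoff_cone :: "'a::real_normed_vector set \<Rightarrow> bool" where
  "birkhoff_cone C \<longleftrightarrow> closed C \<and> convex C
     \<and> {t *\<^sub>R u | t u. t \<ge> 0 \<and> u \<in> C} = C
     \<and> C \<inter> uminus ` C = {0}"

definition subcone :: "'a::real_normed_vector set \<Rightarrow> 'a set \<Rightarrow> bool" where
  "subcone C1 C \<longleftrightarrow> C1 \<subseteq> C \<and> {t *\<^sub>R u | t u. t \<ge> 0 \<and> u \<in> C1} = C1"

definition hilbert_delta :: "'a::real_normed_vector set \<Rightarrow> 'a \<Rightarrow> 'a \<Rightarrow> ereal" where
  "hilbert_delta C a b = Inf (ereal ` {t. t > 0 \<and> t *\<^sub>R a - b \<in> C})"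

definition hilbert_dist :: "'a::real_normed_vector set \<Rightarrow> 'a \<Rightarrow> 'a \<Rightarrow> ereal" where
  "hilbert_dist C a b =
     (if hilbert_delta C a b = \<infinity> \<or> hilbert_delta C b a = \<infinity> then \<infinity>
      else ereal (ln (real_of_ereal (hilbert_delta C a b) * real_of_ereal (hilbert_delta C b a))))"

definition hilbert_diam :: "'a::real_normed_vector set \<Rightarrow> 'a set \<Rightarrow> ereal" where
  "hilbert_diam C C1 = (SUP p \<in> (C1 - {0}) \<times> (C1 - {0}). hilbert_dist C (fst p) (snd p))"

end

theory Submission
  imports Defs
begin

lemma inf_pos_set:
  fixes S :: "real set"
  assumes "\<And>t. t \<in> S \<Longrightarrow> t > 0" and "Inf (ereal ` S) \<noteq> \<infinity>"
  shows "S \<noteq> {}" "Inf (ereal ` S) = ereal (Inf S)" "bdd_below S"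
proof -
  show ne: "S \<noteq> {}" using assms(2) by (auto simp: top_ereal_def)
  show bb: "bdd_below S" using assms(1) by (meson bdd_belowI less_imp_le)
  show "Inf (ereal ` S) = ereal (Inf S)" using ereal_Inf'[OF bb ne] by (simp add: image_comp)
qed

lemma cone_facts:
  fixes C :: "'a::real_normed_vector set"
  assumes "birkhoff_cone C"
  shows "\<And>(t::real) u. t \<ge> 0 \<Longrightarrow> u \<in> C \<Longrightarrow> t *\<^sub>R u \<in> C"
    and "\<And>u v. u \<in> C \<Longrightarrow> v \<in> C \<Longrightarrow> u + v \<in> C"
    and "closed C"
proof -
  have eq: "{t *\<^sub>R u | (t::real) u. t \<ge> 0 \<and> u \<in> C} = C" and cv: "convex C" and cl: "closed C"
    using assms unfolding birkhoff_cone_def by auto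
  show sc: "\<And>(t::real) u. t \<ge> 0 \<Longrightarrow> u \<in> C \<Longrightarrow> t *\<^sub>R u \<in> C"
  proof -
    fix t :: real and u assume "t \<ge> 0" "u \<in> C"
    then have "t *\<^sub>R u \<in> {t *\<^sub>R u | (t::real) u. t \<ge> 0 \<and> u \<in> C}" by blast
    then show "t *\<^sub>R u \<in> C" using eq by simp
  qed
  show "\<And>u v. u \<in> C \<Longrightarrow> v \<in> C \<Longrightarrow> u + v \<in> C"
  proof -
    fix u v assume "u \<in> C" "v \<in> C"
    then have "(1/2) *\<^sub>R u + (1/2) *\<^sub>R v \<in> C" using cv unfolding convex_def by auto
    then have "2 *\<^sub>R ((1/2) *\<^sub>R u + (1/2) *\<^sub>R v) \<in> C" using sc by simp
    then show "u + v \<in> C" by (simp add: scaleR_add_right)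
  qed
  show "closed C" by (fact cl)
qed

theorem lemmaA10:
  fixes C C1 :: "'a::banach set" and l :: "'a \<Rightarrow> real" and K r \<Delta> :: real and x :: 'a
  assumes cone: "birkhoff_cone C"
    and int: "interior C \<noteq> {}"
    and lin: "bounded_linear l"
    and norm_l: "onorm l = 1"
    and Kpos: "0 < K"
    and Kbounds: "\<And>u. u \<in> C \<Longrightarrow> (1 / K) * norm u \<le> l u \<and> l u \<le> norm u"
    and sub: "subcone C1 C"
    and diam: "hilbert_diam C C1 = ereal \<Delta>"
    and xC1: "x \<in> C1" and lx: "l x = 1"
    and rpos: "r > 0" and ball_sub: "ball x r \<subseteq> C1"
  shows "\<forall>y \<in> C1. ball y ((1 / K) * r * exp (- \<Delta>) * norm y) \<subseteq> C"
proof
  fix y assume yC1: "y \<in> C1"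
  note sc = cone_facts(1)[OF cone] and ad = cone_facts(2)[OF cone]
  have C1C: "C1 \<subseteq> C" using sub unfolding subcone_def by auto
  interpret L: bounded_linear l by (fact lin)
  show "ball y ((1 / K) * r * exp (- \<Delta>) * norm y) \<subseteq> C"
  proof (cases "y = 0")
    case True then show ?thesis by simp
  next
    case ynz: False
    have xnz: "x \<noteq> 0" using lx L.zero by auto
    define Syx where "Syx = {t. t > 0 \<and> t *\<^sub>R y - x \<in> C}"
    define Sxy where "Sxy = {t. t > 0 \<and> t *\<^sub>R x - y \<in> C}"
    have "hilbert_dist C y x \<le> hilbert_diam C C1"
      unfolding hilbert_diam_def
      using SUP_upper[of "(y,x)" "(C1 - {0}) \<times> (C1 - {0})" "\<lambda>p. hilbert_dist C (fst p) (snd p)"]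
        yC1 xC1 ynz xnz by auto
    then have dle: "hilbert_dist C y x \<le> ereal \<Delta>" using diam by simp
    then have fin1: "Inf (ereal ` Syx) \<noteq> \<infinity>" and fin2: "Inf (ereal ` Sxy) \<noteq> \<infinity>"
      unfolding hilbert_dist_def hilbert_delta_def Syx_def Sxy_def
      by (auto split: if_splits)
    have p1: "\<And>t. t \<in> Syx \<Longrightarrow> t > 0" and p2: "\<And>t. t \<in> Sxy \<Longrightarrow> t > 0"
      unfolding Syx_def Sxy_def by auto
    note A = inf_pos_set[OF p1 fin1] and B = inf_pos_set[OF p2 fin2]
    define a where "a = Inf Syx"
    define b where "b = Inf Sxy"
    have a0: "a \<ge> 0" unfolding a_def using A(1) p1 by (meson cInf_greatest less_imp_le)
    have lyC: "norm y / K \<le> l y" using Kbounds[of y] yC1 C1C by auto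
    have bge: "norm y / K \<le> b" unfolding b_def
    proof (rule cInf_greatest[OF B(1)])
      fix t assume "t \<in> Sxy"
      then have "t *\<^sub>R x - y \<in> C" unfolding Sxy_def by auto
      then have "0 \<le> l (t *\<^sub>R x - y)" using Kbounds[of "t *\<^sub>R x - y"] Kpos
        by (smt (verit) divide_nonneg_pos mult_nonneg_nonneg norm_ge_zero)
      then have "l y \<le> t" using lx by (simp add: L.diff L.scaleR)
      then show "norm y / K \<le> t" using lyC by simp
    qed
    have ypos: "norm y > 0" using ynz by simp
    have bpos: "b > 0" using bge ypos Kpos by (smt (verit) divide_pos_pos)
    have abnd: "a \<le> exp \<Delta> * K / norm y"
    proof (cases "a = 0")
      case True then show ?thesis using Kpos ypos by simp
    next
      case False
      then have abpos: "a * b > 0" using a0 bpos by simp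
      have "hilbert_dist C y x = ereal (ln (a * b))"
        unfolding hilbert_dist_def hilbert_delta_def
        using A(2) B(2) a_def b_def Syx_def Sxy_def by simp
      then have "ln (a * b) \<le> \<Delta>" using dle by simp
      then have "a * b \<le> exp \<Delta>" using abpos by (metis exp_le_cancel_iff exp_ln)
      then have "a * (norm y / K) \<le> exp \<Delta>" using bge a0
        by (smt (verit) mult_left_mono)
      then show ?thesis using Kpos ypos by (simp add: field_simps)
    qed
    show ?thesis
    proof
      fix z assume "z \<in> ball y ((1 / K) * r * exp (- \<Delta>) * norm y)"
      then have zd: "norm (z - y) < (1 / K) * r * exp (- \<Delta>) * norm y"
        by (simp add: dist_norm norm_minus_commute)
      define w where "w = z - y"
      show "z \<in> C"
      proof (cases "w = 0")
        case True then show ?thesis using yC1 C1C w_def by auto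
      next
        case False
        then have wpos: "norm w > 0" by simp
        have "norm w * (exp \<Delta> * K / norm y) < r"
        proof -
          have "norm w * (exp \<Delta> * K / norm y) < (1 / K) * r * exp (- \<Delta>) * norm y * (exp \<Delta> * K / norm y)"
            using zd w_def Kpos ypos by (intro mult_strict_right_mono) auto
          also have "\<dots> = r" using Kpos ypos by (simp add: field_simps exp_minus)
          finally show ?thesis .
        qed
        then have "a < r / norm w" using abnd wpos
          by (smt (verit) mult_left_mono pos_less_divide_eq mult.commute)
        then obtain t where tS: "t \<in> Syx" and tlt: "t < r / norm w"
          using cInf_lessD[OF A(1)] a_def by blast
        have tpos: "t > 0" and tyx: "t *\<^sub>R y - x \<in> C" using tS unfolding Syx_def by auto
        have "norm (t *\<^sub>R w) < r" using tlt tpos wpos by (simp add: pos_less_divide_eq)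
        then have "x + t *\<^sub>R w \<in> ball x r" by (simp add: dist_norm)
        then have "x + t *\<^sub>R w \<in> C" using ball_sub C1C by auto
        then have "(t *\<^sub>R y - x) + (x + t *\<^sub>R w) \<in> C" using ad tyx by blast
        moreover have "(t *\<^sub>R y - x) + (x + t *\<^sub>R w) = t *\<^sub>R z"
          using w_def by (simp add: algebra_simps flip: scaleR_add_right)
        ultimately have "t *\<^sub>R z \<in> C" by simp
        then have "(1/t) *\<^sub>R (t *\<^sub>R z) \<in> C" using sc[of "1/t" "t *\<^sub>R z"] tpos by simp
        then show ?thesis using tpos by simp
      qed
    qed
  qed
qed

end
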